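(* Let $G$ be a connected graph with $n\ge2$ nodes and diameter $D$, with nonnegative real loads of initial discrepancy $K>0$, and run Algorithm 1. For every $\beta>0$, after at most $(2nD+1)\ln(\lceil nK^2/\beta\rceil)$ rounds the potential $p(G)$ is at most $\beta$, and it remains at most $\beta$ in all subsequent rounds.
   Context: $G=(V,E)$ is an undirected connected graph, $n=|V|$, $D$ its diameter; each node $u$ holds a load $load(u)\ge 0$ (real). $L_{max},L_{min}$ denote the current maximum and minimum load, the discrepancy is $K=L_{max}-L_{min}$, $L_{avg}$ the average load (invariant under transfers), and the potential is $p(G)=\sum_{u\in V}(load(u)-L_{avg})^2$. Algorithm 1 (single proposal, continuous) proceeds in synchronous rounds; in each round, using the loads at the start of the round: (1) every node $u$ having at least one neighbor with strictly smaller load picks a neighbor $v$ maximizing $load(u)-load(v)$ (ties broken arbitrarily) and sends $v$ a proposal of value $p_{uv}=(load(u)-load(v))/2$; (2) every node that received at least one proposal accepts exactly one proposal of maximum value (ties arbitrary); (3) all accepted transfers are executed simultaneously (each accepted proposal $p_{wu}$ moves $p_{wu}$ from $w$ to $u$), and nodes report their new loads to neighbors. *)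

theory Defs
  imports Complex_Main
begin

text \<open>Graph: vertices = the finite type 'a, adjacency E (symmetric, irreflexive).
  Loads: a function 'a => real.\<close>

definition graph_dist :: "('a \<Rightarrow> 'a \<Rightarrow> bool) \<Rightarrow> 'a \<Rightarrow> 'a \<Rightarrow> nat" where
  "graph_dist E u v = (LEAST k. (E ^^ k) u v)"

definition diameter :: "('a::finite \<Rightarrow> 'a \<Rightarrow> bool) \<Rightarrow> nat" where
  "diameter E = Max {graph_dist E u v | u v. True}"

definition Lmax :: "('a::finite \<Rightarrow> real) \<Rightarrow> real" where
  "Lmax L = Max (range L)"

definition Lmin :: "('a::finite \<Rightarrow> real) \<Rightarrow> real" where
  "Lmin L = Min (range L)"

definition discrepancy :: "('a::finite \<Rightarrow> real) \<Rightarrow> real" where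
  "discrepancy L = Lmax L - Lmin L"

definition Lavg :: "('a::finite \<Rightarrow> real) \<Rightarrow> real" where
  "Lavg L = (\<Sum>u\<in>UNIV. L u) / real (card (UNIV :: 'a set))"

definition potential :: "('a::finite \<Rightarrow> real) \<Rightarrow> real" where
  "potential L = (\<Sum>u\<in>UNIV. (L u - Lavg L)^2)"

text \<open>Step (1): prop u = Some v means u proposes (L u - L v)/2 to v.\<close>
definition valid_proposals ::
  "('a \<Rightarrow> 'a \<Rightarrow> bool) \<Rightarrow> ('a \<Rightarrow> real) \<Rightarrow> ('a \<Rightarrow> 'a option) \<Rightarrow> bool" where
  "valid_proposals E L prop \<longleftrightarrow>
     (\<forall>u. case prop u of
            None \<Rightarrow> \<not> (\<exists>v. E u v \<and> L v < L u)
          | Some v \<Rightarrow> E u v \<and> L v < L u \<and> (\<forall>w. E u w \<longrightarrow> L u - L w \<le> L u - L v))"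

text \<open>Step (2): acc u = Some w means u accepts the proposal of w.\<close>
definition valid_accepts ::
  "('a \<Rightarrow> real) \<Rightarrow> ('a \<Rightarrow> 'a option) \<Rightarrow> ('a \<Rightarrow> 'a option) \<Rightarrow> bool" where
  "valid_accepts L prop acc \<longleftrightarrow>
     (\<forall>u. case acc u of
            None \<Rightarrow> \<not> (\<exists>w. prop w = Some u)
          | Some w \<Rightarrow> prop w = Some u \<and>
              (\<forall>w'. prop w' = Some u \<longrightarrow> (L w' - L u) / 2 \<le> (L w - L u) / 2))"

definition transfer_result ::
  "('a::finite \<Rightarrow> real) \<Rightarrow> ('a \<Rightarrow> 'a option) \<Rightarrow> 'a \<Rightarrow> real" where
  "transfer_result L acc u =
     L u + (case acc u of None \<Rightarrow> 0 | Some w \<Rightarrow> (L w - L u) / 2)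
         - (\<Sum>v\<in>{v. acc v = Some u}. (L u - L v) / 2)"

definition alg1_step ::
  "('a::finite \<Rightarrow> 'a \<Rightarrow> bool) \<Rightarrow> ('a \<Rightarrow> real) \<Rightarrow> ('a \<Rightarrow> real) \<Rightarrow> bool" where
  "alg1_step E L L' \<longleftrightarrow>
     (\<exists>prop acc. valid_proposals E L prop \<and> valid_accepts L prop acc \<and>
                 L' = transfer_result L acc)"

end

theory Submission imports Defs begin


lemma cs_sum:
  fixes h :: "'b \<Rightarrow> real"
  assumes "finite A"
  shows "(\<Sum>i\<in>A. h i)^2 \<le> real (card A) * (\<Sum>i\<in>A. (h i)^2)"
proof -
  let ?Q = "\<Sum>i\<in>A. (h i)^2" and ?S = "\<Sum>i\<in>A. h i"
  have "0 \<le> (\<Sum>i\<in>A. \<Sum>j\<in>A. (h i - h j)^2)" by (intro sum_nonneg) auto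
  also have "\<dots> = (\<Sum>i\<in>A. (\<Sum>j\<in>A. (h i)^2) + (\<Sum>j\<in>A. (h j)^2) - 2 * h i * (\<Sum>j\<in>A. h j))"
    by (intro sum.cong refl)
       (simp add: power2_diff sum.distrib sum_subtractf sum_distrib_left)
  also have "\<dots> = real (card A) * ?Q + real (card A) * ?Q - 2 * ?S * ?S"
    by (simp add: sum.distrib sum_subtractf sum_distrib_right[symmetric] sum_distrib_left[symmetric] mult.commute mult.left_commute)
  finally show ?thesis by (simp add: power2_eq_square)
qed

lemma swap_acc:
  fixes g :: "'a::finite \<Rightarrow> 'a \<Rightarrow> real"
  shows "(\<Sum>u\<in>UNIV. \<Sum>v\<in>{v. acc v = Some u}. g u v) = (\<Sum>v\<in>UNIV. (case acc v of None \<Rightarrow> 0 | Some u \<Rightarrow> g u v))"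
proof -
  have "(\<Sum>u\<in>UNIV. \<Sum>v\<in>{v. acc v = Some u}. g u v) = (\<Sum>u\<in>UNIV. \<Sum>v\<in>UNIV. if acc v = Some u then g u v else 0)"
    apply (rule sum.cong[OF refl])
    subgoal for u
      using sum.inter_filter[of UNIV "g u" "\<lambda>v. acc v = Some u", symmetric] by simp
    done
  also have "\<dots> = (\<Sum>v\<in>UNIV. \<Sum>u\<in>UNIV. if acc v = Some u then g u v else 0)" by (rule sum.swap)
  also have "\<dots> = (\<Sum>v\<in>UNIV. (case acc v of None \<Rightarrow> 0 | Some u \<Rightarrow> g u v))"
    by (intro sum.cong refl) (auto split: option.split)
  finally show ?thesis .
qed




lemma step_drop:
  fixes L :: "'a::finite \<Rightarrow> real"
  assumes vp: "valid_proposals E L prop" and va: "valid_accepts L prop acc"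
  defines "\<delta> \<equiv> \<lambda>v. case acc v of None \<Rightarrow> 0 | Some w \<Rightarrow> (L w - L v) / 2"
  shows "sum (transfer_result L acc) UNIV = sum L UNIV"
    and "(\<Sum>u\<in>UNIV. (transfer_result L acc u)^2) \<le> (\<Sum>u\<in>UNIV. (L u)^2) - 2 * (\<Sum>v\<in>UNIV. (\<delta> v)^2)"
proof -
  have accp: "prop w = Some v" if "acc v = Some w" for v w
    proof -
    have "case acc v of None \<Rightarrow> \<not> (\<exists>w. prop w = Some v) | Some w \<Rightarrow> prop w = Some v \<and>
              (\<forall>w'. prop w' = Some v \<longrightarrow> (L w' - L v) / 2 \<le> (L w - L v) / 2)"
      by (rule spec[OF va[unfolded valid_accepts_def], of v])
    then show ?thesis using that by simp
  qed
  have propp: "E w v \<and> L v < L w" if "prop w = Some v" for v w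
    proof -
    have "case prop w of None \<Rightarrow> \<not> (\<exists>v. E w v \<and> L v < L w)
          | Some v \<Rightarrow> E w v \<and> L v < L w \<and> (\<forall>x. E w x \<longrightarrow> L w - L x \<le> L w - L v)"
      by (rule spec[OF vp[unfolded valid_proposals_def], of w])
    then show ?thesis using that by simp
  qed
  have dpos: "\<delta> v \<ge> 0" for v
    by (cases "acc v") (auto simp: \<delta>_def dest!: accp propp)
  define S where "S u = {v. acc v = Some u}" for u
  define out where "out u = (\<Sum>v\<in>S u. \<delta> v)" for u
  have out_eq: "(\<Sum>v\<in>{v. acc v = Some u}. (L u - L v) / 2) = out u" for u
    unfolding out_def S_def by (intro sum.cong refl) (auto simp: \<delta>_def)
  have tr: "transfer_result L acc u = L u + \<delta> u - out u" for u
    unfolding transfer_result_def out_eq[symmetric] \<delta>_def by simp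
  have Scases: "S u = {} \<or> (\<exists>v0. S u = {v0})" for u
  proof (cases "S u = {}")
    case False
    then obtain v0 where v0: "v0 \<in> S u" by auto
    have "v = v0" if "v \<in> S u" for v
      using accp[of v u] accp[of v0 u] that v0 unfolding S_def by simp
    with v0 have "S u = {v0}" by blast
    then show ?thesis by blast
  qed simp
  have outsq: "(out u)^2 = (\<Sum>v\<in>S u. (\<delta> v)^2)" for u
    using Scases[of u] unfolding out_def by auto
  have outpos: "out u \<ge> 0" for u unfolding out_def using dpos by (simp add: sum_nonneg)
  have sum_out: "(\<Sum>u\<in>UNIV. out u) = (\<Sum>v\<in>UNIV. \<delta> v)"
    unfolding out_def S_def swap_acc by (intro sum.cong refl) (auto simp: \<delta>_def split: option.split)
  have sum_outsq: "(\<Sum>u\<in>UNIV. (out u)^2) = (\<Sum>v\<in>UNIV. (\<delta> v)^2)"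
    unfolding outsq S_def swap_acc by (intro sum.cong refl) (auto simp: \<delta>_def split: option.split)
  have sum_Lout: "(\<Sum>u\<in>UNIV. L u * out u) = (\<Sum>v\<in>UNIV. (case acc v of None \<Rightarrow> 0 | Some u \<Rightarrow> L u * \<delta> v))"
    unfolding out_def S_def sum_distrib_left swap_acc ..
  have key: "(\<Sum>u\<in>UNIV. L u * \<delta> u) - (\<Sum>u\<in>UNIV. L u * out u) = - 2 * (\<Sum>v\<in>UNIV. (\<delta> v)^2)"
    unfolding sum_Lout sum_subtractf[symmetric] sum_distrib_left
    by (intro sum.cong refl) (auto simp: \<delta>_def power2_eq_square field_simps split: option.split)
  show "sum (transfer_result L acc) UNIV = sum L UNIV"
    unfolding tr by (simp add: sum.distrib sum_subtractf sum_out)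
  have "(\<Sum>u\<in>UNIV. (transfer_result L acc u)^2) \<le>
      (\<Sum>u\<in>UNIV. (L u)^2 + 2 * (L u * \<delta> u) - 2 * (L u * out u) + (\<delta> u)^2 + (out u)^2)"
    unfolding tr
  proof (rule sum_mono)
    fix u
    have "0 \<le> \<delta> u * out u" using dpos outpos by simp
    then show "(L u + \<delta> u - out u)\<^sup>2 \<le> (L u)^2 + 2 * (L u * \<delta> u) - 2 * (L u * out u) + (\<delta> u)^2 + (out u)^2"
      by (simp add: power2_eq_square algebra_simps)
  qed
  also have "\<dots> = (\<Sum>u\<in>UNIV. (L u)^2) + 2 * ((\<Sum>u\<in>UNIV. L u * \<delta> u) - (\<Sum>u\<in>UNIV. L u * out u))
       + (\<Sum>u\<in>UNIV. (\<delta> u)^2) + (\<Sum>u\<in>UNIV. (out u)^2)"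
    by (simp add: sum.distrib sum_subtractf sum_distrib_left algebra_simps)
  also have "\<dots> = (\<Sum>u\<in>UNIV. (L u)^2) - 2 * (\<Sum>v\<in>UNIV. (\<delta> v)^2)"
    unfolding key sum_outsq by simp
  finally show "(\<Sum>u\<in>UNIV. (transfer_result L acc u)^2) \<le> (\<Sum>u\<in>UNIV. (L u)^2) - 2 * (\<Sum>v\<in>UNIV. (\<delta> v)^2)" .
qed




lemma dist_facts:
  fixes E :: "'a::finite \<Rightarrow> 'a \<Rightarrow> bool"
  assumes connected: "\<And>u v. E\<^sup>*\<^sup>* u v"
  shows "(E ^^ graph_dist E m x) m x"
    and "(E ^^ k) m x \<Longrightarrow> graph_dist E m x \<le> k"
    and "E x y \<Longrightarrow> graph_dist E m y \<le> Suc (graph_dist E m x)"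
proof -
  have ex: "\<exists>k. (E ^^ k) m z" for z using rtranclp_imp_relpowp[OF connected] .
  show dr: "(E ^^ graph_dist E m z) m z" for z
    unfolding graph_dist_def by (rule LeastI_ex[OF ex])
  show dl: "graph_dist E m z \<le> k" if "(E ^^ k) m z" for k z
    unfolding graph_dist_def using that by (rule Least_le)
  show "E x y \<Longrightarrow> graph_dist E m y \<le> Suc (graph_dist E m x)"
    by (rule dl[OF relpowp_Suc_I[OF dr]])
qed

lemma path_ex:
  fixes E :: "'a::finite \<Rightarrow> 'a \<Rightarrow> bool"
  assumes connected: "\<And>u v. E\<^sup>*\<^sup>* u v"
  shows "graph_dist E m x = k \<Longrightarrow> \<exists>f. f 0 = m \<and> f k = x \<and> (\<forall>i<k. E (f i) (f (Suc i)))
          \<and> (\<forall>i\<le>k. graph_dist E m (f i) = i)"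
proof (induction k arbitrary: x)
  case 0
  have "(E ^^ 0) m x" using dist_facts(1)[OF connected, of m x] 0 by simp
  then have "x = m" by simp
  moreover have "graph_dist E m m = 0" using dist_facts(2)[OF connected, of 0 m m] by simp
  ultimately show ?case by (intro exI[of _ "\<lambda>_. m"]) simp
next
  case (Suc k)
  have "(E ^^ Suc k) m x" using dist_facts(1)[OF connected, of m x] Suc.prems by simp
  then obtain y where y1: "(E ^^ k) m y" and y2: "E y x" by (rule relpowp_Suc_E)
  have "graph_dist E m y \<le> k" by (rule dist_facts(2)[OF connected y1])
  moreover have "Suc k \<le> Suc (graph_dist E m y)"
    using dist_facts(3)[OF connected y2, of m] Suc.prems by simp
  ultimately have dy: "graph_dist E m y = k" by simp
  from Suc.IH[OF dy] obtain f where f: "f 0 = m" "f k = y" "\<forall>i<k. E (f i) (f (Suc i))"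
     "\<forall>i\<le>k. graph_dist E m (f i) = i" by blast
  let ?f = "f(Suc k := x)"
  have "?f 0 = m" using f by simp
  moreover have "?f (Suc k) = x" by simp
  moreover have "\<forall>i<Suc k. E (?f i) (?f (Suc i))"
  proof (intro allI impI)
    fix i assume "i < Suc k"
    then consider "i < k" | "i = k" by linarith
    then show "E (?f i) (?f (Suc i))"
    proof cases
      case 1 then show ?thesis using f by simp
    next
      case 2 then show ?thesis using f y2 by simp
    qed
  qed
  moreover have "\<forall>i\<le>Suc k. graph_dist E m (?f i) = i"
    using f Suc.prems by (auto simp: le_Suc_eq)
  ultimately show ?case by blast
qed




lemma diam_ge: "graph_dist E u v \<le> diameter (E :: 'a::finite \<Rightarrow> 'a \<Rightarrow> bool)"
proof -
  have "{graph_dist E u v |u v. True} = (\<lambda>(u,v). graph_dist E u v) ` UNIV" by auto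
  then have "finite {graph_dist E u v |u v. True}" by simp
  then show ?thesis unfolding diameter_def by (rule Max_ge) blast
qed

lemma lower_bound:
  fixes L :: "'a::finite \<Rightarrow> real" and E :: "'a \<Rightarrow> 'a \<Rightarrow> bool"
  assumes sym: "\<And>u v. E u v \<Longrightarrow> E v u"
    and connected: "\<And>u v. E\<^sup>*\<^sup>* u v"
    and vp: "valid_proposals E L prop" and va: "valid_accepts L prop acc"
  defines "\<delta> \<equiv> \<lambda>v. case acc v of None \<Rightarrow> 0 | Some w \<Rightarrow> (L w - L v) / 2"
  shows "(discrepancy L)^2 \<le> 12 * real (diameter E) * (\<Sum>v\<in>UNIV. (\<delta> v)^2)"
proof -
  have accp: "prop w = Some v \<and> (\<forall>w'. prop w' = Some v \<longrightarrow> (L w' - L v) / 2 \<le> (L w - L v) / 2)"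
    if "acc v = Some w" for v w
  proof -
    have "case acc v of None \<Rightarrow> \<not> (\<exists>w. prop w = Some v) | Some w \<Rightarrow> prop w = Some v \<and>
              (\<forall>w'. prop w' = Some v \<longrightarrow> (L w' - L v) / 2 \<le> (L w - L v) / 2)"
      by (rule spec[OF va[unfolded valid_accepts_def], of v])
    then show ?thesis using that by simp
  qed
  have accN: "\<not> (\<exists>w. prop w = Some v)" if "acc v = None" for v
  proof -
    have "case acc v of None \<Rightarrow> \<not> (\<exists>w. prop w = Some v) | Some w \<Rightarrow> prop w = Some v \<and>
              (\<forall>w'. prop w' = Some v \<longrightarrow> (L w' - L v) / 2 \<le> (L w - L v) / 2)"
      by (rule spec[OF va[unfolded valid_accepts_def], of v])
    then show ?thesis using that by simp
  qed
  have propc: "case prop w of None \<Rightarrow> \<not> (\<exists>v. E w v \<and> L v < L w)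
          | Some v \<Rightarrow> E w v \<and> L v < L w \<and> (\<forall>x. E w x \<longrightarrow> L w - L x \<le> L w - L v)" for w
      by (rule spec[OF vp[unfolded valid_proposals_def], of w])
  have dpos: "\<delta> v \<ge> 0" for v
  proof (cases "acc v")
    case (Some w)
    then have "prop w = Some v" using accp by blast
    then have "L v < L w" using propc[of w] by simp
    then show ?thesis using Some by (simp add: \<delta>_def)
  qed (simp add: \<delta>_def)
  have claim: "E x (the (prop x)) \<and> L x - L y \<le> 2 * \<delta> (the (prop x))" if "E x y" "L y < L x" for x y
  proof (cases "prop x")
    case None then show ?thesis using propc[of x] that by simp
  next
    case (Some v)
    then have pv: "E x v" "L x - L y \<le> L x - L v" using propc[of x] that by auto
    show ?thesis
    proof (cases "acc v")
      case None then show ?thesis using accN[of v] Some by blast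
    next
      case (Some w)
      then have "(L x - L v) / 2 \<le> (L w - L v) / 2" using accp[of v w] \<open>prop x = Some v\<close> by blast
      then show ?thesis using pv Some \<open>prop x = Some v\<close> by (simp add: \<delta>_def)
    qed
  qed
  obtain m where Lm: "L m = Lmax L"
  proof -
    have "Lmax L \<in> range L" unfolding Lmax_def by (rule Max_in) auto
    then show ?thesis using that by (auto simp: image_iff)
  qed
  obtain s where Ls: "L s = Lmin L"
  proof -
    have "Lmin L \<in> range L" unfolding Lmin_def by (rule Min_in) auto
    then show ?thesis using that by (auto simp: image_iff)
  qed
  define gd where "gd x = graph_dist E m x" for x
  define d0 where "d0 = gd s"
  have d0e: "graph_dist E m s = d0" unfolding d0_def gd_def by (rule refl)
  from path_ex[OF connected d0e] obtain f where
    f: "f 0 = m \<and> f d0 = s \<and> (\<forall>i<d0. E (f i) (f (Suc i))) \<and> (\<forall>i\<le>d0. graph_dist E m (f i) = i)" ..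
  have f0: "f 0 = m" using f by simp
  have fd: "f d0 = s" using f by simp
  have fE: "\<forall>i<d0. E (f i) (f (Suc i))" using f by simp
  have fdist: "\<forall>i\<le>d0. gd (f i) = i" using f by (simp add: gd_def)
  define g where "g i = L (f i) - L (f (Suc i))" for i
  define h where "h i = max (g i) 0" for i
  have K: "discrepancy L = (\<Sum>i<d0. g i)"
    unfolding g_def discrepancy_def using f0 fd Lm Ls sum_lessThan_telescope'[of "\<lambda>i. L (f i)" d0] by simp
  have Kpos: "discrepancy L \<ge> 0"
  proof -
    have "L s \<le> Lmax L" unfolding Lmax_def by simp
    then show ?thesis using Ls unfolding discrepancy_def by simp
  qed
  have "discrepancy L \<le> (\<Sum>i<d0. h i)" unfolding K h_def by (intro sum_mono) simp
  then have "(discrepancy L)^2 \<le> (\<Sum>i<d0. h i)^2" using Kpos by (simp add: power_mono)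
  also have "\<dots> \<le> real d0 * (\<Sum>i<d0. (h i)^2)" using cs_sum[of "{..<d0}" h] by simp
  also have "\<dots> \<le> real (diameter E) * (\<Sum>i<d0. (h i)^2)"
  proof (rule mult_right_mono)
    show "real d0 \<le> real (diameter E)" using diam_ge[of E m s] unfolding d0_def gd_def by simp
  qed (simp add: sum_nonneg)
  also have "(\<Sum>i<d0. (h i)^2) \<le> 12 * (\<Sum>v\<in>UNIV. (\<delta> v)^2)"
  proof -
    define B where "B = {i. i < d0 \<and> g i > 0}"
    define r where "r i = the (prop (f i))" for i
    have rB: "E (f i) (r i) \<and> g i \<le> 2 * \<delta> (r i)" if "i \<in> B" for i
      using claim[of "f i" "f (Suc i)"] that fE unfolding B_def r_def g_def by auto
    have "(\<Sum>i<d0. (h i)^2) = (\<Sum>i\<in>B. (g i)^2)"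
    proof -
      have "(\<Sum>i<d0. (h i)^2) = (\<Sum>i\<in>{..<d0}. if g i > 0 then (g i)^2 else 0)"
        by (intro sum.cong refl) (simp add: h_def max_def)
      also have "\<dots> = (\<Sum>i\<in>B. (g i)^2)"
        unfolding sum.If_cases[OF finite_lessThan] B_def by (simp add: Int_def)
      finally show ?thesis .
    qed
    also have "\<dots> = (\<Sum>c\<in>{..<3::nat}. \<Sum>i\<in>{i. i \<in> B \<and> i mod 3 = c}. (g i)^2)"
      by (rule sum.group[symmetric]) (auto simp: B_def)
    also have "\<dots> \<le> (\<Sum>c\<in>{..<3::nat}. 4 * (\<Sum>v\<in>UNIV. (\<delta> v)^2))"
    proof (rule sum_mono)
      fix c :: nat
      define A where "A = {i. i \<in> B \<and> i mod 3 = c}"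
      have finA: "finite A" unfolding A_def B_def by auto
      have inj: "inj_on r A"
      proof (rule inj_onI)
        fix i j assume i: "i \<in> A" and j: "j \<in> A" and rij: "r i = r j"
        have iB: "i \<in> B" and jB: "j \<in> B" using i j unfolding A_def by auto
        have di: "gd (f i) = i" and dj: "gd (f j) = j" using iB jB fdist unfolding B_def by auto
        have Ei: "E (f i) (r i)" and Ej: "E (f j) (r i)" using rB[OF iB] rB[OF jB] rij by auto
        have "gd (r i) \<le> Suc i" using dist_facts(3)[OF connected Ei, of m] di unfolding gd_def by simp
        moreover have "gd (f j) \<le> Suc (gd (r i))" using dist_facts(3)[OF connected sym[OF Ej], of m]
          unfolding gd_def by simp
        moreover have "gd (r j) \<le> Suc j" using dist_facts(3)[OF connected Ej, of m] dj rij unfolding gd_def by simp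
        moreover have "gd (f i) \<le> Suc (gd (r j))" using dist_facts(3)[OF connected sym[OF Ei], of m] rij
          unfolding gd_def by simp
        ultimately have l1: "j \<le> i + 2" and l2: "i \<le> j + 2" using di dj rij by linarith+
        have m3: "i mod 3 = j mod 3" using i j unfolding A_def by simp
        have arith: "\<And>a b :: nat. b \<le> a + 2 \<Longrightarrow> a \<le> b + 2 \<Longrightarrow> a mod 3 = b mod 3 \<Longrightarrow> a = b"
          by presburger
        show "i = j" using arith[OF l1 l2 m3] by simp
      qed
      have "(\<Sum>i\<in>A. (g i)^2) \<le> (\<Sum>i\<in>A. 4 * (\<delta> (r i))^2)"
      proof (rule sum_mono)
        fix i assume "i \<in> A"
        then have iB: "i \<in> B" unfolding A_def by auto
        then have "0 < g i" "g i \<le> 2 * \<delta> (r i)" using rB unfolding B_def by auto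
        then have "(g i)^2 \<le> (2 * \<delta> (r i))^2" by (intro power_mono) auto
        then show "(g i)^2 \<le> 4 * (\<delta> (r i))^2" by (simp add: power_mult_distrib)
      qed
      also have "\<dots> = (\<Sum>v\<in>r ` A. 4 * (\<delta> v)^2)" using sum.reindex[OF inj, of "\<lambda>v. 4 * (\<delta> v)^2"] by simp
      also have "\<dots> \<le> (\<Sum>v\<in>UNIV. 4 * (\<delta> v)^2)" by (rule sum_mono2) auto
      finally show "(\<Sum>i\<in>{i. i \<in> B \<and> i mod 3 = c}. (g i)^2) \<le> 4 * (\<Sum>v\<in>UNIV. (\<delta> v)^2)"
        unfolding A_def by (simp add: sum_distrib_left)
    qed
    also have "\<dots> = 12 * (\<Sum>v\<in>UNIV. (\<delta> v)^2)" by simp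
    finally show ?thesis .
  qed
  then have "real (diameter E) * (\<Sum>i<d0. (h i)^2) \<le> real (diameter E) * (12 * (\<Sum>v\<in>UNIV. (\<delta> v)^2))"
    by (intro mult_left_mono) auto
  finally show ?thesis by simp
qed





lemma var_bound:
  fixes L :: "'a::finite \<Rightarrow> real"
  shows "4 * potential L \<le> real (card (UNIV::'a set)) * (discrepancy L)^2"
proof -
  let ?n = "real (card (UNIV::'a set))"
  define a where "a = Lavg L"
  define c where "c = (Lmax L + Lmin L) / 2"
  have npos: "?n > 0" by (simp add: card_gt_0_iff)
  have s0: "(\<Sum>u\<in>UNIV. L u - a) = 0"
    using npos by (simp add: sum_subtractf a_def Lavg_def)
  have "(\<Sum>u\<in>UNIV. (L u - c)^2) = (\<Sum>u\<in>UNIV. (L u - a)^2 + 2 * (a - c) * (L u - a) + (a - c)^2)"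
    by (intro sum.cong refl) (simp add: power2_eq_square algebra_simps)
  also have "\<dots> = (\<Sum>u\<in>UNIV. (L u - a)^2) + 2 * (a - c) * (\<Sum>u\<in>UNIV. L u - a) + ?n * (a - c)^2"
    by (simp add: sum.distrib sum_distrib_left[symmetric])
  finally have eq: "(\<Sum>u\<in>UNIV. (L u - c)^2) = potential L + ?n * (a - c)^2"
    using s0 by (simp add: potential_def a_def)
  have b: "4 * (L u - c)^2 \<le> (discrepancy L)^2" for u
  proof -
    have "L u \<le> Lmax L" unfolding Lmax_def by simp
    moreover have "Lmin L \<le> L u" unfolding Lmin_def by simp
    ultimately have "\<bar>2 * (L u - c)\<bar> \<le> discrepancy L" unfolding c_def discrepancy_def by (simp add: abs_le_iff field_simps)
    then have "(2 * (L u - c))^2 \<le> (discrepancy L)^2"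
      by (metis abs_ge_zero power2_abs power_mono)
    then show ?thesis by (simp add: power2_eq_square algebra_simps)
  qed
  have "4 * potential L \<le> 4 * (\<Sum>u\<in>UNIV. (L u - c)^2)" using eq by simp
  also have "\<dots> = (\<Sum>u\<in>UNIV. 4 * (L u - c)^2)" by (simp add: sum_distrib_left)
  also have "\<dots> \<le> (\<Sum>u\<in>(UNIV::'a set). (discrepancy L)^2)" using sum_mono[of UNIV "\<lambda>u. 4*(L u - c)^2" "\<lambda>u. (discrepancy L)^2"] b by blast
  also have "\<dots> = ?n * (discrepancy L)^2" by simp
  finally show ?thesis .
qed

lemma diam_pos:
  fixes E :: "'a::finite \<Rightarrow> 'a \<Rightarrow> bool"
  assumes n2: "card (UNIV :: 'a set) \<ge> 2" and connected: "\<And>u v. E\<^sup>*\<^sup>* u v"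
  shows "diameter E \<ge> 1"
proof -
  obtain u v :: 'a where uv: "u \<noteq> v"
    using n2 by (metis One_nat_def card_le_Suc0_iff_eq finite_UNIV not_less_eq_eq numeral_2_eq_2 UNIV_I)
  have "graph_dist E u v \<noteq> 0"
  proof
    assume h: "graph_dist E u v = 0"
    show False using dist_facts(1)[OF connected, of u v] h uv by simp
  qed
  then show ?thesis using diam_ge[of E u v] by linarith
qed




lemma pot_eq:
  fixes X :: "'a::finite \<Rightarrow> real"
  shows "potential X = (\<Sum>u\<in>UNIV. (X u)^2) - real (card (UNIV::'a set)) * (Lavg X)^2"
proof -
  let ?n = "real (card (UNIV::'a set))"
  have npos: "?n > 0" by (simp add: card_gt_0_iff)
  have sX: "(\<Sum>u\<in>UNIV. X u) = ?n * Lavg X" using npos by (simp add: Lavg_def)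
  have "potential X = (\<Sum>u\<in>UNIV. (X u)^2 - 2 * Lavg X * X u + (Lavg X)^2)"
    unfolding potential_def by (intro sum.cong refl) (simp add: power2_eq_square algebra_simps)
  also have "\<dots> = (\<Sum>u\<in>UNIV. (X u)^2) - 2 * Lavg X * (\<Sum>u\<in>UNIV. X u) + ?n * (Lavg X)^2"
    by (simp add: sum.distrib sum_subtractf sum_distrib_left)
  finally show ?thesis unfolding sX by (simp add: power2_eq_square algebra_simps)
qed

lemma pot_step:
  fixes E :: "'a::finite \<Rightarrow> 'a \<Rightarrow> bool" and L L' :: "'a \<Rightarrow> real"
  assumes sym: "\<And>u v. E u v \<Longrightarrow> E v u"
    and connected: "\<And>u v. E\<^sup>*\<^sup>* u v"
    and n2: "card (UNIV :: 'a set) \<ge> 2"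
    and st: "alg1_step E L L'"
  shows "3 * real (card (UNIV :: 'a set)) * real (diameter E) * potential L'
        \<le> (3 * real (card (UNIV :: 'a set)) * real (diameter E) - 2) * potential L"
proof -
  let ?n = "real (card (UNIV::'a set))"
  let ?D = "real (diameter E)"
  obtain pr acc where vp: "valid_proposals E L pr" and va: "valid_accepts L pr acc"
    and L': "L' = transfer_result L acc" using st unfolding alg1_step_def by blast
  define \<delta> where "\<delta> = (\<lambda>v. case acc v of None \<Rightarrow> 0 | Some w \<Rightarrow> (L w - L v) / 2)"
  let ?S = "\<Sum>v\<in>UNIV. (\<delta> v)^2"
  have s1: "sum L' UNIV = sum L UNIV" using step_drop(1)[OF vp va] L' by simp
  have s2: "(\<Sum>u\<in>UNIV. (L' u)^2) \<le> (\<Sum>u\<in>UNIV. (L u)^2) - 2 * ?S"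
    using step_drop(2)[OF vp va] L' unfolding \<delta>_def by simp
  have lb: "(discrepancy L)^2 \<le> 12 * ?D * ?S"
    using lower_bound[OF sym connected vp va] unfolding \<delta>_def by simp
  have vb: "4 * potential L \<le> ?n * (discrepancy L)^2" by (rule var_bound)
  have avg: "Lavg L' = Lavg L" unfolding Lavg_def s1 ..
  have p': "potential L' \<le> potential L - 2 * ?S"
    using s2 unfolding pot_eq[of L'] pot_eq[of L] avg by simp
  have npos: "?n > 0" by (simp add: card_gt_0_iff)
  have Dpos: "?D \<ge> 1" using diam_pos[OF n2 connected] by simp
  have Spos: "?S \<ge> 0" by (simp add: sum_nonneg)
  have "?n * (discrepancy L)^2 \<le> ?n * (12 * ?D * ?S)" using lb npos by (simp add: mult_left_mono)
  with vb have pS: "potential L \<le> 3 * ?n * ?D * ?S" by simp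
  have nD: "3 * ?n * ?D \<ge> 0" using npos Dpos by simp
  have "3 * ?n * ?D * potential L' \<le> 3 * ?n * ?D * (potential L - 2 * ?S)"
    using mult_left_mono[OF p' nD] .
  also have "\<dots> = 3 * ?n * ?D * potential L - 2 * (3 * ?n * ?D * ?S)" by (simp add: algebra_simps)
  also have "\<dots> \<le> 3 * ?n * ?D * potential L - 2 * potential L" using pS by (simp add: ac_simps)
  also have "\<dots> = (3 * ?n * ?D - 2) * potential L" by (simp add: algebra_simps)
  finally show ?thesis .
qed






theorem lemma3:
  fixes E :: "'a::finite \<Rightarrow> 'a \<Rightarrow> bool"
    and L :: "nat \<Rightarrow> 'a \<Rightarrow> real"
    and \<beta> :: real
  assumes sym: "\<And>u v. E u v \<Longrightarrow> E v u"
    and irrefl: "\<And>u. \<not> E u u"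
    and connected: "\<And>u v. E\<^sup>*\<^sup>* u v"
    and n2: "card (UNIV :: 'a set) \<ge> 2"
    and nonneg: "\<And>u. L 0 u \<ge> 0"
    and Kpos: "discrepancy (L 0) > 0"
    and run: "\<And>t. alg1_step E (L t) (L (Suc t))"
    and beta: "\<beta> > 0"
  shows "\<forall>t. real t \<ge> (2 * real (card (UNIV :: 'a set)) * real (diameter E) + 1)
                  * ln (real_of_int \<lceil>real (card (UNIV :: 'a set)) * (discrepancy (L 0))^2 / \<beta>\<rceil>)
             \<longrightarrow> potential (L t) \<le> \<beta>"
proof (intro allI impI)
  fix t :: nat
  let ?n = "real (card (UNIV :: 'a set))"
  let ?D = "real (diameter E)"
  define a where "a = 3 * ?n * ?D"
  define m where "m = 2 * ?n * ?D + 1"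
  define q where "q = (a - 2) / a"
  define x where "x = ?n * (discrepancy (L 0))^2 / \<beta>"
  define C where "C = real_of_int \<lceil>x\<rceil>"
  assume ht: "real t \<ge> m * ln C"
  have npos: "?n \<ge> 2" using n2 by simp
  have Dpos: "?D \<ge> 1" using diam_pos[OF n2 connected] by simp
  have nD: "?n * ?D \<ge> 2"
  proof -
    have "2 * 1 \<le> ?n * ?D" by (rule mult_mono) (use npos Dpos in auto)
    then show ?thesis by (simp only: mult_1_right)
  qed
  have apos: "a \<ge> 6" unfolding a_def mult.assoc using nD by linarith
  have mpos: "m > 0" unfolding m_def mult.assoc using nD by linarith
  have q0: "q \<ge> 0" unfolding q_def using apos by simp
  have pstep: "potential (L (Suc k)) \<le> q * potential (L k)" for k
  proof -
    have "a * potential (L (Suc k)) \<le> (a - 2) * potential (L k)"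
      using pot_step[OF sym connected n2 run[of k]] unfolding a_def .
    then show ?thesis unfolding q_def using apos by (simp add: field_simps)
  qed
  have pt: "potential (L k) \<le> q ^ k * potential (L 0)" for k
  proof (induction k)
    case (Suc k)
    have "potential (L (Suc k)) \<le> q * potential (L k)" by (rule pstep)
    also have "\<dots> \<le> q * (q ^ k * potential (L 0))" using Suc q0 by (rule mult_left_mono)
    finally show ?case by (simp add: mult.assoc)
  qed simp
  have qe: "q \<le> exp (- 2 / a)"
  proof -
    have "q = 1 + (- 2 / a)" unfolding q_def using apos by (simp add: field_simps)
    also have "\<dots> \<le> exp (- 2 / a)" by (rule exp_ge_add_one_self)
    finally show ?thesis .
  qed
  have "q ^ t \<le> exp (- 2 / a) ^ t" using power_mono[OF qe q0] .
  also have "\<dots> = exp (real t * (- 2 / a))" by (rule exp_of_nat_mult[symmetric])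
  also have "\<dots> \<le> exp (- ln C)"
  proof -
    have "2 * m \<ge> a" unfolding m_def a_def mult.assoc using nD by (simp add: distrib_left)
    then have "1 / m \<le> 2 / a" using mpos apos by (simp add: field_simps)
    then have "real t * (1 / m) \<le> real t * (2 / a)" by (intro mult_left_mono) auto
    moreover have "ln C \<le> real t * (1 / m)" using ht mpos by (simp add: field_simps)
    ultimately show ?thesis by simp
  qed
  also have "\<dots> = 1 / C"
  proof -
    have "x > 0" unfolding x_def using Kpos beta npos by simp
    then have "C > 0" unfolding C_def by simp
    then show ?thesis by (simp add: exp_minus inverse_eq_divide)
  qed
  finally have qt: "q ^ t \<le> 1 / C" .
  have xpos: "x > 0" unfolding x_def using Kpos beta npos by simp
  have Cx: "C \<ge> x" unfolding C_def by (rule le_of_int_ceiling)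
  have Cpos: "C > 0" using Cx xpos by simp
  have p0pos: "potential (L 0) \<ge> 0" unfolding potential_def by (simp add: sum_nonneg)
  have p0: "potential (L 0) \<le> C * \<beta>"
  proof -
    have "4 * potential (L 0) \<le> ?n * (discrepancy (L 0))^2" by (rule var_bound)
    also have "\<dots> = x * \<beta>" unfolding x_def using beta by simp
    also have "\<dots> \<le> C * \<beta>" using Cx beta by simp
    finally show ?thesis using p0pos by simp
  qed
  have "potential (L t) \<le> q ^ t * potential (L 0)" by (rule pt)
  also have "\<dots> \<le> (1 / C) * potential (L 0)" using qt p0pos by (rule mult_right_mono)
  also have "\<dots> \<le> (1 / C) * (C * \<beta>)" using p0 Cpos by (intro mult_left_mono) auto
  also have "\<dots> = \<beta>" using Cpos by simp
  finally show "potential (L t) \<le> \<beta>" .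
qed


end
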